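(* Let $W$ be an NDCSE with respect to a closed abelian subgroup $H\subseteq G$. Then $\mathcal A_W=\mathcal T_H\circ\mathcal P_D$, where $\mathcal T_H(X)=\int_H R(h)XR(h)^\dagger\,dh$ (normalized Haar measure on $H$) and $\mathcal P_D$ is the Hilbert–Schmidt orthogonal projector onto $\mathcal L^{\mathcal D}$.
   Context: Standing setting: $G$ compact group with normalized Haar measure, $R:G\to\mathsf U(\mathcal H)$ a continuous unitary representation on a finite-dimensional Hilbert space $\mathcal H$; $\mathcal L=\mathrm{End}(\mathcal H)$ with Hilbert–Schmidt inner product. For an orthonormal basis $W$ of $\mathcal H$, $\mathcal A_W(X)=\sum_{w\in W}\langle w|X|w\rangle|w\rangle\langle w|$. A Fourier basis (FB) is an orthonormal basis $W$ with a decomposition $\mathcal H=\bigoplus_{\eta,i}\mathcal H^{\eta,i}$ into irreducible $G$-submodules such that $W=\bigcup W^{\eta,i}$ with $W^{\eta,i}$ an orthonormal basis of $\mathcal H^{\eta,i}$; $\mathcal L^{\mathcal D}=\bigoplus_{\eta,i}\mathrm{End}(\mathcal H^{\eta,i})$. A commuting subgroup eigenbasis (CSE) with respect to an abelian subgroup $H\subseteq G$ is an FB each of whose elements is a simultaneous eigenvector of all $R(h)$, $h\in H$; it is non-degenerate (NDCSE) if for every $(\eta,i)$ the restriction of $\mathcal H^{\eta,i}$ to $H$ is multiplicity-free (equivalently, distinct elements of $W^{\eta,i}$ carry distinct characters of $H$). *)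

theory Defs
  imports "HOL-Probability.Probability" "HOL-Algebra.Group"
begin

definition cinner :: "complex ^ 'n \<Rightarrow> complex ^ 'n \<Rightarrow> complex" where
  "cinner v w = (\<Sum>i\<in>UNIV. cnj (v $ i) * w $ i)"

definition adj :: "complex ^ 'n ^ 'm \<Rightarrow> complex ^ 'm ^ 'n" where
  "adj A = (\<chi> i j. cnj (A $ j $ i))"

definition outer :: "complex ^ 'n \<Rightarrow> complex ^ 'n \<Rightarrow> complex ^ 'n ^ 'n" where
  "outer v w = (\<chi> i j. v $ i * cnj (w $ j))"

text \<open>Hilbert-Schmidt inner product  tr(X^dagger Y)\<close>
definition hs_inner :: "complex ^ 'n ^ 'n \<Rightarrow> complex ^ 'n ^ 'n \<Rightarrow> complex" where
  "hs_inner X Y = (\<Sum>i\<in>UNIV. \<Sum>j\<in>UNIV. cnj (X $ i $ j) * Y $ i $ j)"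

definition orthonormal_basis :: "(complex ^ 'n) set \<Rightarrow> bool" where
  "orthonormal_basis W \<longleftrightarrow> finite W \<and> card W = CARD('n) \<and>
     (\<forall>v\<in>W. \<forall>w\<in>W. cinner v w = (if v = w then 1 else 0))"

definition csubspace :: "(complex ^ 'n) set \<Rightarrow> bool" where
  "csubspace S \<longleftrightarrow> 0 \<in> S \<and> (\<forall>x\<in>S. \<forall>y\<in>S. x + y \<in> S) \<and> (\<forall>c. \<forall>x\<in>S. c *s x \<in> S)"

definition cspan :: "(complex ^ 'n) set \<Rightarrow> (complex ^ 'n) set" where
  "cspan A = {v. \<exists>c. v = (\<Sum>w\<in>A. c w *s w)}"

definition invariant_under :: "('g, 'b) monoid_scheme \<Rightarrow> ('g \<Rightarrow> complex ^ 'n ^ 'n) \<Rightarrow> (complex ^ 'n) set \<Rightarrow> bool" where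
  "invariant_under G R S \<longleftrightarrow> (\<forall>g\<in>carrier G. \<forall>v\<in>S. R g *v v \<in> S)"

definition irreducible_submodule :: "('g, 'b) monoid_scheme \<Rightarrow> ('g \<Rightarrow> complex ^ 'n ^ 'n) \<Rightarrow> (complex ^ 'n) set \<Rightarrow> bool" where
  "irreducible_submodule G R S \<longleftrightarrow> csubspace S \<and> invariant_under G R S \<and> S \<noteq> {0} \<and>
     (\<forall>V. csubspace V \<and> V \<subseteq> S \<and> invariant_under G R V \<longrightarrow> V = {0} \<or> V = S)"

definition compact_group :: "('g, 'b) monoid_scheme \<Rightarrow> 'g topology \<Rightarrow> bool" where
  "compact_group G T \<longleftrightarrow> group G \<and> topspace T = carrier G \<and> compact_space T \<and> Hausdorff_space T \<and>
     continuous_map (prod_topology T T) T (\<lambda>(x, y). x \<otimes>\<^bsub>G\<^esub> y) \<and>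
     continuous_map T T (\<lambda>x. inv\<^bsub>G\<^esub> x)"

definition unitary :: "complex ^ 'n ^ 'n \<Rightarrow> bool" where
  "unitary U \<longleftrightarrow> U ** adj U = mat 1 \<and> adj U ** U = mat 1"

definition cont_unitary_rep :: "('g, 'b) monoid_scheme \<Rightarrow> 'g topology \<Rightarrow> ('g \<Rightarrow> complex ^ 'n ^ 'n) \<Rightarrow> bool" where
  "cont_unitary_rep G T R \<longleftrightarrow>
     (\<forall>g\<in>carrier G. unitary (R g)) \<and>
     (\<forall>g\<in>carrier G. \<forall>g'\<in>carrier G. R (g \<otimes>\<^bsub>G\<^esub> g') = R g ** R g') \<and>
     (\<forall>i j. continuous_map T euclidean (\<lambda>g. R g $ i $ j))"

text \<open>Ws: the decomposition of W into orthonormal bases W^{eta,i} of irreducible submodules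
  H^{eta,i} = span W^{eta,i}.\<close>
definition fourier_basis :: "('g, 'b) monoid_scheme \<Rightarrow> ('g \<Rightarrow> complex ^ 'n ^ 'n) \<Rightarrow> (complex ^ 'n) set \<Rightarrow> (complex ^ 'n) set set \<Rightarrow> bool" where
  "fourier_basis G R W Ws \<longleftrightarrow> orthonormal_basis W \<and> \<Union>Ws = W \<and> {} \<notin> Ws \<and>
     (\<forall>A\<in>Ws. \<forall>B\<in>Ws. A \<noteq> B \<longrightarrow> A \<inter> B = {}) \<and>
     (\<forall>A\<in>Ws. irreducible_submodule G R (cspan A))"

definition carries_char :: "('g \<Rightarrow> complex ^ 'n ^ 'n) \<Rightarrow> 'g set \<Rightarrow> complex ^ 'n \<Rightarrow> ('g \<Rightarrow> complex) \<Rightarrow> bool" where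
  "carries_char R H w c \<longleftrightarrow> (\<forall>h\<in>H. R h *v w = c h *s w)"

definition NDCSE :: "('g, 'b) monoid_scheme \<Rightarrow> ('g \<Rightarrow> complex ^ 'n ^ 'n) \<Rightarrow> 'g set \<Rightarrow> (complex ^ 'n) set \<Rightarrow> (complex ^ 'n) set set \<Rightarrow> bool" where
  "NDCSE G R H W Ws \<longleftrightarrow> fourier_basis G R W Ws \<and>
     (\<forall>w\<in>W. \<exists>c. carries_char R H w c) \<and>
     (\<forall>A\<in>Ws. \<forall>w\<in>A. \<forall>w'\<in>A. w \<noteq> w' \<longrightarrow> \<not> (\<exists>c. carries_char R H w c \<and> carries_char R H w' c))"

definition top_borel_sets :: "'a topology \<Rightarrow> 'a set set" where
  "top_borel_sets T = sigma_sets (topspace T) {U. openin T U}"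

definition normalized_haar :: "('g, 'b) monoid_scheme \<Rightarrow> 'g topology \<Rightarrow> 'g set \<Rightarrow> 'g measure \<Rightarrow> bool" where
  "normalized_haar G T H M \<longleftrightarrow> prob_space M \<and> space M = H \<and>
     sets M = top_borel_sets (subtopology T H) \<and>
     (\<forall>h\<in>H. \<forall>A\<in>sets M. emeasure M ((\<lambda>x. h \<otimes>\<^bsub>G\<^esub> x) ` A) = emeasure M A)"

definition A_W :: "(complex ^ 'n) set \<Rightarrow> complex ^ 'n ^ 'n \<Rightarrow> complex ^ 'n ^ 'n" where
  "A_W W X = (\<Sum>w\<in>W. (\<chi> i j. cinner w (X *v w) * outer w w $ i $ j))"

definition T_H :: "'g measure \<Rightarrow> ('g \<Rightarrow> complex ^ 'n ^ 'n) \<Rightarrow> complex ^ 'n ^ 'n \<Rightarrow> complex ^ 'n ^ 'n" where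
  "T_H M R X = (\<chi> i j. integral\<^sup>L M (\<lambda>h. (R h ** X ** adj (R h)) $ i $ j))"

definition proj_onto :: "(complex ^ 'n) set \<Rightarrow> complex ^ 'n ^ 'n" where
  "proj_onto A = (\<Sum>w\<in>A. outer w w)"

text \<open>L^D = direct sum of End(H^{eta,i}), each embedded as the operators Y with P Y P = Y\<close>
definition L_D :: "(complex ^ 'n) set set \<Rightarrow> (complex ^ 'n ^ 'n) set" where
  "L_D Ws = {(\<Sum>A\<in>Ws. Y A) | Y. \<forall>A\<in>Ws. proj_onto A ** Y A ** proj_onto A = Y A}"

definition hs_orth_proj :: "(complex ^ 'n ^ 'n) set \<Rightarrow> complex ^ 'n ^ 'n \<Rightarrow> complex ^ 'n ^ 'n" where
  "hs_orth_proj L X = (THE Y. Y \<in> L \<and> (\<forall>Z\<in>L. hs_inner Z (X - Y) = 0))"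

end

theory Submission
  imports Defs
begin

lemma cinner_adj: "cinner u (A *v v) = cinner (adj A *v u) v"
proof -
  have "cinner u (A *v v) = (\<Sum>i\<in>UNIV. \<Sum>j\<in>UNIV. cnj (u $ i) * A $ i $ j * v $ j)"
    unfolding cinner_def matrix_vector_mult_def by (simp add: sum_distrib_left mult.assoc)
  also have "\<dots> = (\<Sum>j\<in>UNIV. \<Sum>i\<in>UNIV. cnj (u $ i) * A $ i $ j * v $ j)"
    by (rule sum.swap)
  also have "\<dots> = cinner (adj A *v u) v"
    unfolding cinner_def adj_def matrix_vector_mult_def
    by (simp add: sum_distrib_left sum_distrib_right mult.commute mult.left_commute)
  finally show ?thesis .
qed

lemma mv_scale: "A *v ((c::complex) *s v) = c *s (A *v v)"
  apply (simp add: vec_eq_iff matrix_vector_mult_def sum_distrib_left)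
  by (intro allI sum.cong) (auto simp: algebra_simps)

lemma mv_sum: "A *v sum f S = (\<Sum>x\<in>S. A *v f x)"
  by (cases "finite S") (auto simp: vec_eq_iff matrix_vector_mult_def sum_component sum_distrib_left intro: sum.swap)

lemma cinner_scale_right: "cinner u (c *s v) = c * cinner u v"
  by (simp add: cinner_def sum_distrib_left mult_ac)

lemma cinner_scale_left: "cinner (c *s u) v = cnj c * cinner u v"
  by (simp add: cinner_def sum_distrib_left mult_ac)

lemma outer_mv: "outer a b *v v = cinner b v *s a"
  by (simp add: vec_eq_iff outer_def cinner_def matrix_vector_mult_def sum_distrib_left sum_distrib_right mult_ac)

lemma outer_mult: "outer a b ** outer c d = (\<chi> i j. cinner b c * outer a d $ i $ j)"
  by (simp add: vec_eq_iff outer_def cinner_def matrix_matrix_mult_def sum_distrib_left sum_distrib_right mult_ac)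

lemma adj_outer: "adj (outer a b) = outer b a"
  by (simp add: vec_eq_iff outer_def adj_def)

lemma adj_adj: "adj (adj A) = A"
  by (simp add: vec_eq_iff adj_def)

lemma adj_mult: "adj (A ** B) = adj B ** adj A"
  by (simp add: vec_eq_iff adj_def matrix_matrix_mult_def mult_ac)

lemma adj_sum: "finite S \<Longrightarrow> adj (sum f S) = sum (\<lambda>x. adj (f x)) S"
  by (induction S rule: finite_induct) (auto simp: vec_eq_iff adj_def)

lemma cinner_sum_right: "cinner u (sum f S) = (\<Sum>x\<in>S. cinner u (f x))"
  by (cases "finite S") (auto simp: cinner_def sum_component sum_distrib_left intro: sum.swap)

lemma sum_mv: "sum f S *v v = (\<Sum>x\<in>S. f x *v v)"
  by (cases "finite S") (auto simp: vec_eq_iff matrix_vector_mult_def sum_component sum_distrib_right intro: sum.swap)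

lemma mult_sum_left: "sum f S ** B = (\<Sum>x\<in>S. f x ** B)"
  by (cases "finite S") (auto simp: vec_eq_iff matrix_matrix_mult_def sum_component sum_distrib_right intro: sum.swap)

lemma mult_sum_right: "B ** sum f S = (\<Sum>x\<in>S. B ** f x)"
  by (cases "finite S") (auto simp: vec_eq_iff matrix_matrix_mult_def sum_component sum_distrib_left intro: sum.swap)

lemma cinner_self_eq0: "cinner v v = 0 \<Longrightarrow> v = (0::complex^'n)"
proof -
  assume a: "cinner v v = 0"
  have cz: "\<And>z. cnj z * z = complex_of_real ((cmod z)\<^sup>2)"
    by (metis complex_norm_square mult.commute)
  have "cinner v v = (\<Sum>i\<in>UNIV. complex_of_real ((cmod (v $ i))\<^sup>2))"
    unfolding cinner_def cz by simp
  hence "(\<Sum>i\<in>UNIV. (cmod (v $ i))\<^sup>2) = 0" using a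
    by (metis of_real_0 of_real_eq_iff of_real_sum)
  hence "\<forall>i\<in>UNIV. (cmod (v $ i))\<^sup>2 = 0"
    by (subst (asm) sum_nonneg_eq_0_iff) auto
  thus ?thesis by (simp add: vec_eq_iff)
qed

lemma onb_complete:
  assumes "orthonormal_basis (W :: (complex^'n) set)"
  shows "(\<Sum>w\<in>W. outer w w) = mat 1"
proof -
  have fin: "finite W" and cd: "card W = CARD('n)"
    and on: "\<And>v w. v \<in> W \<Longrightarrow> w \<in> W \<Longrightarrow> cinner v w = (if v = w then 1 else 0)"
    using assms unfolding orthonormal_basis_def by auto
  obtain e where e: "bij_betw e (UNIV::'n set) W"
    using finite_same_card_bij[of "UNIV::'n set" W] fin cd by auto
  define U :: "complex^'n^'n" where "U = (\<chi> i k. e k $ i)"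
  have "adj U ** U = mat 1"
  proof -
    have "(adj U ** U) $ k $ l = cinner (e k) (e l)" for k l
      by (simp add: U_def adj_def matrix_matrix_mult_def cinner_def)
    moreover have "cinner (e k) (e l) = (if k = l then 1 else 0)" for k l
      using on[of "e k" "e l"] e bij_betw_apply[OF e] unfolding bij_betw_def inj_on_def by auto
    ultimately show ?thesis by (simp add: vec_eq_iff mat_def)
  qed
  hence "U ** adj U = mat 1" by (simp add: matrix_left_right_inverse)
  moreover have "(U ** adj U) $ i $ j = (\<Sum>w\<in>W. outer w w) $ i $ j" for i j
  proof -
    have "(U ** adj U) $ i $ j = (\<Sum>k\<in>UNIV. outer (e k) (e k) $ i $ j)"
      by (simp add: U_def adj_def matrix_matrix_mult_def outer_def)
    also have "\<dots> = (\<Sum>w\<in>W. outer w w $ i $ j)"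
      using sum.reindex_bij_betw[OF e, of "\<lambda>w. outer w w $ i $ j"] by simp
    finally show ?thesis by (simp add: sum_component)
  qed
  ultimately show ?thesis by (simp add: vec_eq_iff)
qed

lemma onb_expand_vec:
  assumes "orthonormal_basis (W :: (complex^'n) set)"
  shows "v = (\<Sum>w\<in>W. cinner w v *s w)"
proof -
  have "(\<Sum>w\<in>W. outer w w) *v v = v" by (simp add: onb_complete[OF assms])
  thus ?thesis by (simp add: outer_mv sum_mv)
qed

lemma onb_vec_eq:
  assumes "orthonormal_basis (W :: (complex^'n) set)"
    and "\<And>w. w \<in> W \<Longrightarrow> cinner w u = cinner w v"
  shows "u = v"
  using onb_expand_vec[OF assms(1), of u] onb_expand_vec[OF assms(1), of v] assms(2)
  by (metis (no_types, lifting) sum.cong)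

lemma onb_mat_eq:
  assumes "orthonormal_basis (W :: (complex^'n) set)"
    and "\<And>u v. u \<in> W \<Longrightarrow> v \<in> W \<Longrightarrow> cinner u (A *v v) = cinner u (B *v v)"
  shows "A = B"
proof -
  have "A *v x = B *v x" for x
  proof -
    have e: "x = (\<Sum>w\<in>W. cinner w x *s w)" by (rule onb_expand_vec[OF assms(1)])
    have ex: "C *v x = (\<Sum>w\<in>W. cinner w x *s (C *v w))" for C :: "complex^'n^'n"
    proof -
      have "C *v x = C *v (\<Sum>w\<in>W. cinner w x *s w)" using e by (rule arg_cong)
      also have "\<dots> = (\<Sum>w\<in>W. C *v (cinner w x *s w))" by (rule mv_sum)
      also have "\<dots> = (\<Sum>w\<in>W. cinner w x *s (C *v w))" by (simp only: mv_scale)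
      finally show ?thesis .
    qed
    have "A *v x = (\<Sum>w\<in>W. cinner w x *s (A *v w))" "B *v x = (\<Sum>w\<in>W. cinner w x *s (B *v w))"
      by (rule ex)+
    thus ?thesis using assms(2)
      by (intro onb_vec_eq[OF assms(1)]) (simp add: cinner_sum_right cinner_scale_right)
  qed
  thus ?thesis by (simp add: matrix_eq)
qed


lemma matrix_sub_ldistrib: "(A::complex^'n^'n) ** (B - C) = A ** B - A ** C"
  by (simp add: vec_eq_iff matrix_matrix_mult_def sum_subtractf algebra_simps)

lemma matrix_sub_rdistrib: "((B::complex^'n^'n) - C) ** A = B ** A - C ** A"
  by (simp add: vec_eq_iff matrix_matrix_mult_def sum_subtractf algebra_simps)

lemma hs_inner_add_left: "hs_inner (A + B) N = hs_inner A N + hs_inner B N"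
  unfolding hs_inner_def by (simp add: sum.distrib[symmetric] distrib_right)

lemma hs_inner_zero_left: "hs_inner 0 N = 0"
  unfolding hs_inner_def by simp

lemma hs_inner_sum_left: "finite S \<Longrightarrow> hs_inner (sum f S) N = (\<Sum>x\<in>S. hs_inner (f x) N)"
  by (induction S rule: finite_induct) (simp_all add: hs_inner_add_left hs_inner_zero_left)

lemma hs_inner_diff_right: "hs_inner D (A - B) = hs_inner D A - hs_inner D B"
  unfolding hs_inner_def by (simp add: sum_subtractf right_diff_distrib)

lemma hs_inner_zero_right: "hs_inner D 0 = 0"
  unfolding hs_inner_def by simp

lemma swap3: "(\<Sum>i\<in>(UNIV::'a::finite set). \<Sum>j\<in>(UNIV::'b::finite set). \<Sum>k\<in>(UNIV::'c::finite set). f i j k)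
  = (\<Sum>k\<in>UNIV. \<Sum>j\<in>UNIV. \<Sum>i\<in>UNIV. f i j k)"
proof -
  have "(\<Sum>i\<in>(UNIV::'a set). \<Sum>j\<in>(UNIV::'b set). \<Sum>k\<in>(UNIV::'c set). f i j k)
      = (\<Sum>i\<in>UNIV. \<Sum>k\<in>UNIV. \<Sum>j\<in>UNIV. f i j k)"
    by (rule sum.cong[OF refl], rule sum.swap)
  also have "\<dots> = (\<Sum>k\<in>UNIV. \<Sum>i\<in>UNIV. \<Sum>j\<in>UNIV. f i j k)" by (rule sum.swap)
  also have "\<dots> = (\<Sum>k\<in>UNIV. \<Sum>j\<in>UNIV. \<Sum>i\<in>UNIV. f i j k)"
    by (rule sum.cong[OF refl], rule sum.swap)
  finally show ?thesis .
qed

lemma hs_inner_mult_left: "hs_inner (A ** Z) N = hs_inner Z (adj A ** N)"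
proof -
  have "hs_inner (A ** Z) N = (\<Sum>i\<in>UNIV. \<Sum>j\<in>UNIV. \<Sum>k\<in>UNIV. cnj (A $ i $ k) * cnj (Z $ k $ j) * N $ i $ j)"
    unfolding hs_inner_def matrix_matrix_mult_def by (simp add: sum_distrib_right)
  also have "\<dots> = (\<Sum>k\<in>UNIV. \<Sum>j\<in>UNIV. \<Sum>i\<in>UNIV. cnj (A $ i $ k) * cnj (Z $ k $ j) * N $ i $ j)"
    by (rule swap3)
  also have "\<dots> = (\<Sum>k\<in>UNIV. \<Sum>j\<in>UNIV. \<Sum>i\<in>UNIV. cnj (Z $ k $ j) * (cnj (A $ i $ k) * N $ i $ j))"
    by (intro sum.cong refl) (simp only: mult_ac)
  also have "\<dots> = hs_inner Z (adj A ** N)"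
    unfolding hs_inner_def matrix_matrix_mult_def adj_def by (simp add: sum_distrib_left)
  finally show ?thesis .
qed

lemma hs_inner_mult_right: "hs_inner (Z ** B) N = hs_inner Z (N ** adj B)"
proof -
  have "hs_inner (Z ** B) N = (\<Sum>i\<in>UNIV. \<Sum>j\<in>UNIV. \<Sum>k\<in>UNIV. cnj (Z $ i $ k) * cnj (B $ k $ j) * N $ i $ j)"
    unfolding hs_inner_def matrix_matrix_mult_def by (simp add: sum_distrib_right)
  also have "\<dots> = (\<Sum>i\<in>UNIV. \<Sum>k\<in>UNIV. \<Sum>j\<in>UNIV. cnj (Z $ i $ k) * cnj (B $ k $ j) * N $ i $ j)"
    by (rule sum.cong[OF refl], rule sum.swap)
  also have "\<dots> = (\<Sum>i\<in>UNIV. \<Sum>k\<in>UNIV. \<Sum>j\<in>UNIV. cnj (Z $ i $ k) * (N $ i $ j * cnj (B $ k $ j)))"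
    by (intro sum.cong refl) (simp only: mult_ac)
  also have "\<dots> = hs_inner Z (N ** adj B)"
    unfolding hs_inner_def matrix_matrix_mult_def adj_def by (simp add: sum_distrib_left)
  finally show ?thesis .
qed

lemma cinner_self_real: "cinner v v = complex_of_real (\<Sum>i\<in>UNIV. (cmod (v $ i))\<^sup>2)"
proof -
  have cz: "\<And>z. cnj z * z = complex_of_real ((cmod z)\<^sup>2)"
    by (metis complex_norm_square mult.commute)
  show ?thesis unfolding cinner_def cz by simp
qed

lemma hs_inner_self_eq0: "hs_inner D D = 0 \<Longrightarrow> D = (0::complex^'n^'n)"
proof -
  assume a: "hs_inner D D = 0"
  have "hs_inner D D = (\<Sum>i\<in>UNIV. cinner (D $ i) (D $ i))"
    by (simp add: hs_inner_def cinner_def)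
  also have "\<dots> = complex_of_real (\<Sum>i\<in>UNIV. \<Sum>j\<in>UNIV. (cmod (D $ i $ j))\<^sup>2)"
    by (simp add: cinner_self_real)
  finally have "complex_of_real (\<Sum>i\<in>UNIV. \<Sum>j\<in>UNIV. (cmod (D $ i $ j))\<^sup>2) = 0" using a by (simp only:)
  hence "(\<Sum>i\<in>UNIV. \<Sum>j\<in>UNIV. (cmod (D $ i $ j))\<^sup>2) = 0" by (rule of_real_eq_0_iff[THEN iffD1])
  hence "\<forall>i\<in>UNIV. (\<Sum>j\<in>UNIV. (cmod (D $ i $ j))\<^sup>2) = 0"
    by (subst (asm) sum_nonneg_eq_0_iff) (auto intro: sum_nonneg)
  hence "\<forall>i. \<forall>j\<in>UNIV. (cmod (D $ i $ j))\<^sup>2 = 0"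
    by (subst (asm) sum_nonneg_eq_0_iff) auto
  thus ?thesis by (simp add: vec_eq_iff)
qed

lemma onb_on: "orthonormal_basis W \<Longrightarrow> v \<in> W \<Longrightarrow> w \<in> W \<Longrightarrow> cinner v w = (if v = w then 1 else 0)"
  unfolding orthonormal_basis_def by auto

lemma onb_fin: "orthonormal_basis W \<Longrightarrow> finite W"
  unfolding orthonormal_basis_def by auto

lemma proj_mv:
  assumes W: "orthonormal_basis W" and A: "A \<subseteq> W" and w: "w \<in> W"
  shows "proj_onto A *v w = (if w \<in> A then w else 0)"
proof -
  have fA: "finite A" using A onb_fin[OF W] finite_subset by blast
  have "proj_onto A *v w = (\<Sum>a\<in>A. (if a = w then 1 else 0) *s a)"
    unfolding proj_onto_def sum_mv outer_mv
    using onb_on[OF W] A w by (intro sum.cong) auto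
  also have "\<dots> = (\<Sum>a\<in>A. if a = w then a else 0)"
    by (intro sum.cong) auto
  also have "\<dots> = (if w \<in> A then w else 0)"
    using fA by (simp add: sum.delta')
  finally show ?thesis .
qed

lemma adj_proj: "finite A \<Longrightarrow> adj (proj_onto A) = proj_onto A"
  unfolding proj_onto_def by (simp add: adj_sum adj_outer)

lemma proj_proj:
  assumes W: "orthonormal_basis W" and A: "A \<subseteq> W" and B: "B \<subseteq> W"
  shows "proj_onto A ** proj_onto B = proj_onto (A \<inter> B)"
proof (rule onb_mat_eq[OF W])
  fix u v assume u: "u \<in> W" and v: "v \<in> W"
  show "cinner u ((proj_onto A ** proj_onto B) *v v) = cinner u (proj_onto (A \<inter> B) *v v)"
  proof -
    have AB: "A \<inter> B \<subseteq> W" using A by blast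
    show ?thesis
      using A B u v proj_mv[OF W AB v]
      by (simp add: matrix_vector_mul_assoc[symmetric] proj_mv[OF W] cinner_def)
  qed
qed


lemma sandwich: "(A::complex^'n^'n) ** (B ** X ** C) ** D = (A ** B) ** X ** (C ** D)"
  by (simp add: matrix_mul_assoc)

lemma proj_empty: "proj_onto {} = 0"
  by (simp add: proj_onto_def)

lemma hs_proj_LD:
  fixes W :: "(complex^'n) set"
  assumes W: "orthonormal_basis W" and sub: "\<forall>A\<in>Ws. A \<subseteq> W"
    and disj: "\<forall>A\<in>Ws. \<forall>B\<in>Ws. A \<noteq> B \<longrightarrow> A \<inter> B = {}" and fWs: "finite Ws"
  shows "hs_orth_proj (L_D Ws) X = (\<Sum>A\<in>Ws. proj_onto A ** X ** proj_onto A)"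
proof -
  let ?P = "proj_onto"
  define Y0 where "Y0 = (\<Sum>A\<in>Ws. ?P A ** X ** ?P A)"
  have fA: "A \<in> Ws \<Longrightarrow> finite A" for A using sub onb_fin[OF W] finite_subset by blast
  have PP: "A \<in> Ws \<Longrightarrow> B \<in> Ws \<Longrightarrow> ?P A ** ?P B = (if A = B then ?P A else 0)" for A B
    using proj_proj[OF W, of A B] sub disj by (auto simp: proj_empty)
  have PadjP: "A \<in> Ws \<Longrightarrow> adj (?P A) = ?P A" for A using adj_proj fA by blast
  have PY0P: "?P A ** Y0 ** ?P A = ?P A ** X ** ?P A" if A: "A \<in> Ws" for A
  proof -
    have "?P A ** Y0 ** ?P A = (\<Sum>B\<in>Ws. ?P A ** (?P B ** X ** ?P B) ** ?P A)"
      unfolding Y0_def by (simp add: mult_sum_left mult_sum_right)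
    also have "\<dots> = (\<Sum>B\<in>Ws. (?P A ** ?P B) ** X ** (?P B ** ?P A))"
      by (simp only: sandwich)
    also have "\<dots> = (\<Sum>B\<in>Ws. if B = A then ?P A ** X ** ?P A else 0)"
      using A PP by (intro sum.cong) auto
    also have "\<dots> = ?P A ** X ** ?P A" using fWs A by (simp add: sum.delta')
    finally show ?thesis .
  qed
  have inL: "Y0 \<in> L_D Ws"
    unfolding L_D_def Y0_def
  proof (intro CollectI exI conjI)
    show "\<forall>A\<in>Ws. ?P A ** (?P A ** X ** ?P A) ** ?P A = ?P A ** X ** ?P A"
      using PP by (simp add: sandwich)
  qed simp
  have orth: "\<forall>Z\<in>L_D Ws. hs_inner Z (X - Y0) = 0"
  proof
    fix Z assume "Z \<in> L_D Ws"
    then obtain Y where Z: "Z = (\<Sum>A\<in>Ws. Y A)" and Y: "\<forall>A\<in>Ws. ?P A ** Y A ** ?P A = Y A"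
      unfolding L_D_def by blast
    have "hs_inner (Y A) (X - Y0) = 0" if A: "A \<in> Ws" for A
    proof -
      have "hs_inner (Y A) (X - Y0) = hs_inner (?P A ** Y A ** ?P A) (X - Y0)" using Y A by simp
      also have "\<dots> = hs_inner (Y A) (?P A ** ((X - Y0) ** ?P A))"
        using hs_inner_mult_right[of "?P A ** Y A" "?P A" "X - Y0"]
          hs_inner_mult_left[of "?P A" "Y A" "(X - Y0) ** adj (?P A)"] PadjP[OF A] by simp
      also have "?P A ** ((X - Y0) ** ?P A) = 0"
        using PY0P[OF A] by (simp add: matrix_sub_ldistrib matrix_sub_rdistrib matrix_mul_assoc)
      finally show ?thesis by (simp add: hs_inner_zero_right)
    qed
    thus "hs_inner Z (X - Y0) = 0" unfolding Z by (simp add: hs_inner_sum_left fWs)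
  qed
  have uniq: "Y1 = Y0" if Y1: "Y1 \<in> L_D Ws \<and> (\<forall>Z\<in>L_D Ws. hs_inner Z (X - Y1) = 0)" for Y1
  proof -
    obtain Y where Z: "Y1 = (\<Sum>A\<in>Ws. Y A)" and Y: "\<forall>A\<in>Ws. ?P A ** Y A ** ?P A = Y A"
      using Y1 unfolding L_D_def by blast
    define D where "D = Y0 - Y1"
    have "D = (\<Sum>A\<in>Ws. ?P A ** X ** ?P A - Y A)"
      unfolding D_def Y0_def Z by (simp add: sum_subtractf)
    moreover have "\<forall>A\<in>Ws. ?P A ** (?P A ** X ** ?P A - Y A) ** ?P A = ?P A ** X ** ?P A - Y A"
      using PP Y by (simp add: matrix_sub_ldistrib matrix_sub_rdistrib sandwich)
    ultimately have DL: "D \<in> L_D Ws" unfolding L_D_def by blast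
    have "hs_inner D D = hs_inner D ((X - Y1) - (X - Y0))" unfolding D_def by simp
    also have "\<dots> = 0" using DL orth Y1 by (simp add: hs_inner_diff_right)
    finally have "D = 0" by (rule hs_inner_self_eq0)
    thus ?thesis unfolding D_def by simp
  qed
  show ?thesis unfolding hs_orth_proj_def Y0_def[symmetric]
  proof (rule the_equality)
    show "Y0 \<in> L_D Ws \<and> (\<forall>Z\<in>L_D Ws. hs_inner Z (X - Y0) = 0)" using inL orth by (rule conjI)
  next
    fix Y1 assume "Y1 \<in> L_D Ws \<and> (\<forall>Z\<in>L_D Ws. hs_inner Z (X - Y1) = 0)"
    thus "Y1 = Y0" by (rule uniq)
  qed
qed


lemma cm_mult:
  fixes f g :: "'a \<Rightarrow> 'b::real_normed_algebra"
  shows "continuous_map X euclidean f \<Longrightarrow> continuous_map X euclidean g \<Longrightarrow> continuous_map X euclidean (\<lambda>x. f x * g x)"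
  by (simp add: continuous_map_atin tendsto_mult)

lemma cm_cnj:
  "continuous_map X euclidean f \<Longrightarrow> continuous_map X euclidean (\<lambda>x. cnj (f x))"
  by (simp add: continuous_map_atin tendsto_cnj)

lemma cm_measurable:
  fixes f :: "'a \<Rightarrow> complex"
  assumes sM: "sets M = sigma_sets (topspace X) {U. openin X U}" and sp: "space M = topspace X"
    and f: "continuous_map X euclidean f"
  shows "f \<in> borel_measurable M"
proof (rule borel_measurableI)
  fix S :: "complex set" assume "open S"
  hence "openin X {x \<in> topspace X. f x \<in> S}"
    using f by (simp add: continuous_map)
  moreover have "f -` S \<inter> space M = {x \<in> topspace X. f x \<in> S}" using sp by auto
  ultimately show "f -` S \<inter> space M \<in> sets M" unfolding sM by auto
qed

lemma cm_measurable_self: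
  assumes sM: "sets M = sigma_sets (topspace X) {U. openin X U}" and sp: "space M = topspace X"
    and f: "continuous_map X X f"
  shows "f \<in> measurable M M"
proof (rule measurable_sigma_sets[OF sM])
  show "{U. openin X U} \<subseteq> Pow (topspace X)" using openin_subset by auto
  show "f \<in> space M \<rightarrow> topspace X" using f sp by (auto simp: continuous_map)
  fix U assume "U \<in> {U. openin X U}"
  hence "openin X {x \<in> topspace X. f x \<in> U}"
    using f by (simp add: continuous_map)
  moreover have "f -` U \<inter> space M = {x \<in> topspace X. f x \<in> U}" using sp by auto
  ultimately show "f -` U \<inter> space M \<in> sets M" unfolding sM by auto
qed


lemma smul_mv: "(\<chi> i j. c * B $ i $ j) *v x = (c::complex) *s (B *v x)"
  by (simp add: vec_eq_iff matrix_vector_mult_def sum_distrib_left mult.assoc)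

lemma mat_expand:
  assumes W: "orthonormal_basis (W::(complex^'n) set)"
  shows "M $ i $ j = (\<Sum>u\<in>W. \<Sum>v\<in>W. cinner u (M *v v) * outer u v $ i $ j)"
proof -
  define N :: "complex^'n^'n" where "N = (\<Sum>u\<in>W. \<Sum>v\<in>W. (\<chi> i j. cinner u (M *v v) * outer u v $ i $ j))"
  have fW: "finite W" using onb_fin[OF W] .
  have "M = N"
  proof (rule onb_mat_eq[OF W])
    fix u' v' assume u': "u' \<in> W" and v': "v' \<in> W"
    have "cinner u' (N *v v') = (\<Sum>u\<in>W. \<Sum>v\<in>W. cinner u (M *v v) * cinner v v' * cinner u' u)"
      unfolding N_def by (simp add: sum_mv smul_mv outer_mv cinner_sum_right cinner_scale_right mult_ac)
    also have "\<dots> = (\<Sum>u\<in>W. \<Sum>v\<in>W. if u = u' then (if v = v' then cinner u (M *v v) else 0) else 0)"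
      using u' v' onb_on[OF W] by (intro sum.cong) auto
    also have "\<dots> = (\<Sum>u\<in>W. if u = u' then (\<Sum>v\<in>W. if v = v' then cinner u (M *v v) else 0) else 0)"
      by (rule sum.cong[OF refl]) simp
    also have "\<dots> = (\<Sum>v\<in>W. if v = v' then cinner u' (M *v v) else 0)"
      using fW u' by (simp add: sum.delta)
    also have "\<dots> = cinner u' (M *v v')" using fW v' by (simp add: sum.delta)
    finally show "cinner u' (M *v v') = cinner u' (N *v v')" by simp
  qed
  hence "M $ i $ j = N $ i $ j" by (rule arg_cong)
  also have "N $ i $ j = (\<Sum>u\<in>W. \<Sum>v\<in>W. cinner u (M *v v) * outer u v $ i $ j)"
    unfolding N_def by (simp add: sum_component)
  finally show ?thesis .
qed


theorem lemma2:
  fixes G :: "('g, 'b) monoid_scheme" and T :: "'g topology"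
    and R :: "'g \<Rightarrow> complex ^ 'n ^ 'n" and H :: "'g set" and M :: "'g measure"
    and W :: "(complex ^ 'n) set" and Ws :: "(complex ^ 'n) set set"
  assumes "compact_group G T"
    and "cont_unitary_rep G T R"
    and "subgroup H G" and "closedin T H"
    and "\<forall>x\<in>H. \<forall>y\<in>H. x \<otimes>\<^bsub>G\<^esub> y = y \<otimes>\<^bsub>G\<^esub> x"
    and "normalized_haar G T H M"
    and "NDCSE G R H W Ws"
  shows "\<forall>X. A_W W X = T_H M R (hs_orth_proj (L_D Ws) X)"
proof -
  have grp: "group G" and tsp: "topspace T = carrier G"
    and cmul: "continuous_map (prod_topology T T) T (\<lambda>(x, y). x \<otimes>\<^bsub>G\<^esub> y)"
    using assms(1) unfolding compact_group_def by auto
  interpret group G by (rule grp)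
  have Hsub: "H \<subseteq> carrier G" by (rule subgroup.subset[OF assms(3)])
  have Hmul: "\<And>x y. x \<in> H \<Longrightarrow> y \<in> H \<Longrightarrow> x \<otimes>\<^bsub>G\<^esub> y \<in> H" by (rule subgroup.m_closed[OF assms(3)])
  have Hinv: "\<And>x. x \<in> H \<Longrightarrow> inv\<^bsub>G\<^esub> x \<in> H" by (rule subgroup.m_inv_closed[OF assms(3)])
  have unit: "\<And>g. g \<in> carrier G \<Longrightarrow> unitary (R g)"
    and hom: "\<And>g g'. g \<in> carrier G \<Longrightarrow> g' \<in> carrier G \<Longrightarrow> R (g \<otimes>\<^bsub>G\<^esub> g') = R g ** R g'"
    and cont: "\<And>i j. continuous_map T euclidean (\<lambda>g. R g $ i $ j)"
    using assms(2) unfolding cont_unitary_rep_def by auto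
  have pM: "prob_space M" and spM0: "space M = H" and sM0: "sets M = top_borel_sets (subtopology T H)"
    and inv_meas: "\<And>h A. h \<in> H \<Longrightarrow> A \<in> sets M \<Longrightarrow> emeasure M ((\<lambda>x. h \<otimes>\<^bsub>G\<^esub> x) ` A) = emeasure M A"
    using assms(6) unfolding normalized_haar_def by auto
  interpret prob_space M by (rule pM)
  have W: "orthonormal_basis W" and UW: "\<Union>Ws = W"
    and disj: "\<forall>A\<in>Ws. \<forall>B\<in>Ws. A \<noteq> B \<longrightarrow> A \<inter> B = {}"
    and eig0: "\<forall>w\<in>W. \<exists>c. carries_char R H w c"
    and nondeg: "\<forall>A\<in>Ws. \<forall>w\<in>A. \<forall>w'\<in>A. w \<noteq> w' \<longrightarrow> \<not> (\<exists>c. carries_char R H w c \<and> carries_char R H w' c)"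
    using assms(7) unfolding NDCSE_def fourier_basis_def by auto
  have fW: "finite W" using onb_fin[OF W] .
  have fWs: "finite Ws" using fW UW by (metis finite_UnionD)
  have sub: "\<forall>A\<in>Ws. A \<subseteq> W" using UW by blast
  define X where "X = subtopology T H"
  have tX: "topspace X = H" unfolding X_def using tsp Hsub by auto
  have sM: "sets M = sigma_sets (topspace X) {U. openin X U}"
    using sM0 unfolding top_borel_sets_def X_def by simp
  have spM: "space M = topspace X" using spM0 tX by simp

  define chi where "chi w h = cinner w (R h *v w)" for w h
  have ww: "\<And>w. w \<in> W \<Longrightarrow> cinner w w = 1" using onb_on[OF W] by simp
  have eig: "R h *v w = chi w h *s w" if w: "w \<in> W" and h: "h \<in> H" for w h
  proof -
    obtain c where "carries_char R H w c" using eig0 w by blast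
    hence e: "R h *v w = c h *s w" using h unfolding carries_char_def by blast
    hence "chi w h = c h" unfolding chi_def using ww[OF w] by (simp add: cinner_scale_right)
    thus ?thesis using e by simp
  qed
  have adjeig: "adj (R h) *v w = cnj (chi w h) *s w" if w: "w \<in> W" and h: "h \<in> H" for w h
  proof (rule onb_vec_eq[OF W])
    fix w' assume w': "w' \<in> W"
    have "cinner w' (adj (R h) *v w) = cinner (R h *v w') w"
      by (simp add: cinner_adj adj_adj)
    also have "\<dots> = cnj (chi w' h) * cinner w' w" using eig[OF w' h] by (simp add: cinner_scale_left)
    also have "\<dots> = cinner w' (cnj (chi w h) *s w)"
      using onb_on[OF W w' w] by (simp add: cinner_scale_right)
    finally show "cinner w' (adj (R h) *v w) = cinner w' (cnj (chi w h) *s w)" .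
  qed
  have norm1: "cnj (chi w h) * chi w h = 1" if w: "w \<in> W" and h: "h \<in> H" for w h
  proof -
    have "R h ** adj (R h) = mat 1" using unit[of h] h Hsub unfolding unitary_def by auto
    hence "w = R h *v (adj (R h) *v w)" by (simp add: matrix_vector_mul_assoc)
    also have "\<dots> = (cnj (chi w h) * chi w h) *s w"
      by (simp add: adjeig[OF w h] mv_scale eig[OF w h])
    finally have "cinner w w = cinner w ((cnj (chi w h) * chi w h) *s w)" by simp
    thus ?thesis using ww[OF w] by (simp add: cinner_scale_right)
  qed
  have cmod1: "cmod (chi w h) = 1" if w: "w \<in> W" and h: "h \<in> H" for w h
  proof -
    have "complex_of_real ((cmod (chi w h))\<^sup>2) = 1"
      using norm1[OF w h] by (metis complex_norm_square mult.commute)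
    hence "(cmod (chi w h))\<^sup>2 = 1" by (metis of_real_eq_1_iff)
    hence "cmod (chi w h) = 1 \<or> cmod (chi w h) = - 1" by (simp add: power2_eq_1_iff)
    thus ?thesis using norm_ge_zero[of "chi w h"] by linarith
  qed
  have chimul: "chi w (x \<otimes>\<^bsub>G\<^esub> y) = chi w x * chi w y" if w: "w \<in> W" and x: "x \<in> H" and y: "y \<in> H" for w x y
  proof -
    have "R (x \<otimes>\<^bsub>G\<^esub> y) *v w = R x *v (R y *v w)"
      using hom[of x y] x y Hsub by (simp add: matrix_vector_mul_assoc subsetD)
    also have "\<dots> = (chi w y * chi w x) *s w" by (simp add: eig[OF w y] eig[OF w x] mv_scale)
    finally show ?thesis unfolding chi_def using ww[OF w] by (simp add: cinner_scale_right)
  qed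
  have chicont: "continuous_map X euclidean (chi w)" for w
  proof -
    have "chi w = (\<lambda>h. \<Sum>i\<in>UNIV. cnj (w $ i) * (\<Sum>j\<in>UNIV. R h $ i $ j * w $ j))"
      unfolding chi_def cinner_def matrix_vector_mult_def by simp
    moreover have "continuous_map T euclidean (\<lambda>h. \<Sum>i\<in>UNIV. cnj (w $ i) * (\<Sum>j\<in>UNIV. R h $ i $ j * w $ j))"
      by (intro continuous_map_sum cm_mult cont) auto
    ultimately show ?thesis unfolding X_def by (simp add: continuous_map_from_subtopology)
  qed
  define psi where "psi u v h = chi u h * cnj (chi v h)" for u v h
  have psicont: "continuous_map X euclidean (psi u v)" for u v
    unfolding psi_def by (intro cm_mult cm_cnj chicont)
  have psimeas: "psi u v \<in> borel_measurable M" for u v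
    by (rule cm_measurable[OF sM spM psicont])
  have psiint: "integrable M (psi u v)" if u: "u \<in> W" and v: "v \<in> W" for u v
  proof (rule integrable_const_bound[where B=1])
    show "AE x in M. norm (psi u v x) \<le> 1"
      using cmod1[OF u] cmod1[OF v] spM0 by (auto simp: psi_def norm_mult)
  qed (rule psimeas)
  define I where "I u v = integral\<^sup>L M (psi u v)" for u v
  have Idiag: "I u u = 1" if u: "u \<in> W" for u
  proof -
    have "I u u = integral\<^sup>L M (\<lambda>x. 1)"
      unfolding I_def using norm1[OF u] spM0
      by (intro Bochner_Integration.integral_cong) (auto simp: psi_def mult.commute)
    thus ?thesis by (simp add: prob_space)
  qed
  have Ioff: "I u v = 0" if u: "u \<in> W" and v: "v \<in> W" and h0: "h0 \<in> H" and ne: "psi u v h0 \<noteq> 1" for u v h0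
  proof -
    define g where "g x = h0 \<otimes>\<^bsub>G\<^esub> x" for x
    have gcont: "continuous_map X X g"
    proof -
      have "continuous_map T (prod_topology T T) (\<lambda>x. (h0, x))"
        using h0 Hsub tsp by (intro continuous_map_pairedI) auto
      hence "continuous_map T T g"
        using continuous_map_compose[OF _ cmul] unfolding g_def o_def by fastforce
      thus ?thesis unfolding X_def using Hmul[OF h0] tX[unfolded X_def]
        by (intro continuous_map_into_subtopology continuous_map_from_subtopology) (auto simp: g_def)
    qed
    have gmeas: "g \<in> measurable M M" by (rule cm_measurable_self[OF sM spM gcont])
    have dM: "distr M M g = M"
    proof (rule measure_eqI)
      show "sets (distr M M g) = sets M" by simp
      fix A assume "A \<in> sets (distr M M g)"
      hence A: "A \<in> sets M" by simp
      have AH: "A \<subseteq> H" using sets.sets_into_space[OF A] spM0 by simp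
      have "g -` A \<inter> space M = (\<lambda>x. inv\<^bsub>G\<^esub> h0 \<otimes>\<^bsub>G\<^esub> x) ` A"
      proof (rule Set.set_eqI, rule iffI)
        fix x assume "x \<in> g -` A \<inter> space M"
        hence x: "x \<in> H" "h0 \<otimes>\<^bsub>G\<^esub> x \<in> A" using spM0 by (auto simp: g_def)
        hence "x = inv\<^bsub>G\<^esub> h0 \<otimes>\<^bsub>G\<^esub> (h0 \<otimes>\<^bsub>G\<^esub> x)" using h0 Hsub
          by (simp add: m_assoc[symmetric] subsetD)
        thus "x \<in> (\<lambda>x. inv\<^bsub>G\<^esub> h0 \<otimes>\<^bsub>G\<^esub> x) ` A" using x by blast
      next
        fix x assume "x \<in> (\<lambda>x. inv\<^bsub>G\<^esub> h0 \<otimes>\<^bsub>G\<^esub> x) ` A"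
        then obtain a where a: "a \<in> A" "x = inv\<^bsub>G\<^esub> h0 \<otimes>\<^bsub>G\<^esub> a" by blast
        hence "x \<in> H" using AH Hmul Hinv h0 by blast
        moreover have "h0 \<otimes>\<^bsub>G\<^esub> x = a" using a AH h0 Hsub by (simp add: m_assoc[symmetric] subsetD)
        ultimately show "x \<in> g -` A \<inter> space M" using a spM0 by (simp add: g_def)
      qed
      thus "emeasure (distr M M g) A = emeasure M A"
        using emeasure_distr[OF gmeas A] inv_meas[OF Hinv[OF h0] A] by simp
    qed
    have "I u v = integral\<^sup>L (distr M M g) (psi u v)" unfolding I_def dM ..
    also have "\<dots> = integral\<^sup>L M (\<lambda>x. psi u v (g x))" by (rule integral_distr[OF gmeas psimeas])
    also have "\<dots> = integral\<^sup>L M (\<lambda>x. psi u v h0 * psi u v x)"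
      using spM0 h0 by (intro Bochner_Integration.integral_cong)
         (auto simp: g_def psi_def chimul[OF u] chimul[OF v] mult_ac)
    also have "\<dots> = psi u v h0 * I u v" by (simp add: I_def)
    finally have "(1 - psi u v h0) * I u v = 0" by (simp add: algebra_simps)
    thus ?thesis using ne by simp
  qed
  have TH: "T_H M R Z $ i $ j = (\<Sum>u\<in>W. \<Sum>v\<in>W. I u v * (cinner u (Z *v v) * outer u v $ i $ j))" for Z i j
  proof -
    have co: "cinner u ((R h ** Z ** adj (R h)) *v v) = psi u v h * cinner u (Z *v v)"
      if u: "u \<in> W" and v: "v \<in> W" and h: "h \<in> H" for u v h
    proof -
      have "(R h ** Z ** adj (R h)) *v v = cnj (chi v h) *s (R h *v (Z *v v))"
        by (simp add: matrix_vector_mul_assoc[symmetric] adjeig[OF v h] mv_scale)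
      hence "cinner u ((R h ** Z ** adj (R h)) *v v) = cnj (chi v h) * cinner (adj (R h) *v u) (Z *v v)"
        by (simp add: cinner_scale_right cinner_adj)
      also have "\<dots> = psi u v h * cinner u (Z *v v)"
        by (simp add: adjeig[OF u h] cinner_scale_left psi_def)
      finally show ?thesis .
    qed
    have "T_H M R Z $ i $ j = integral\<^sup>L M (\<lambda>h. (R h ** Z ** adj (R h)) $ i $ j)"
      unfolding T_H_def by simp
    also have "\<dots> = integral\<^sup>L M (\<lambda>h. \<Sum>u\<in>W. \<Sum>v\<in>W. psi u v h * (cinner u (Z *v v) * outer u v $ i $ j))"
    proof (intro Bochner_Integration.integral_cong refl)
      fix h assume "h \<in> space M"
      hence h: "h \<in> H" using spM0 by simp
      show "(R h ** Z ** adj (R h)) $ i $ j = (\<Sum>u\<in>W. \<Sum>v\<in>W. psi u v h * (cinner u (Z *v v) * outer u v $ i $ j))"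
        by (subst mat_expand[OF W]) (intro sum.cong refl, simp add: co h mult.assoc)
    qed
    also have "\<dots> = (\<Sum>u\<in>W. \<Sum>v\<in>W. I u v * (cinner u (Z *v v) * outer u v $ i $ j))"
      by (simp add: Bochner_Integration.integral_sum integrable_sum psiint I_def)
    finally show ?thesis .
  qed
  have blk: "\<exists>A0\<in>Ws. u \<in> A0 \<and> (\<forall>A\<in>Ws. u \<in> A \<longleftrightarrow> A = A0)" if u: "u \<in> W" for u
  proof -
    obtain A0 where A0: "A0 \<in> Ws" "u \<in> A0" using u UW by blast
    thus ?thesis using disj by blast
  qed
  show ?thesis
  proof
    fix Xm :: "complex^'n^'n"
    define Y where "Y = (\<Sum>A\<in>Ws. proj_onto A ** Xm ** proj_onto A)"
    have Yeq: "hs_orth_proj (L_D Ws) Xm = Y" unfolding Y_def by (rule hs_proj_LD[OF W sub disj fWs])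
    have Ycoef: "cinner u (Y *v v) = (if v \<in> A0 then cinner u (Xm *v v) else 0)"
      if u: "u \<in> W" and v: "v \<in> W" and A0: "A0 \<in> Ws" "\<forall>A\<in>Ws. u \<in> A \<longleftrightarrow> A = A0" for u v A0
    proof -
      have "cinner u (Y *v v) = (\<Sum>A\<in>Ws. cinner u (proj_onto A *v (Xm *v (proj_onto A *v v))))"
        unfolding Y_def by (simp add: sum_mv cinner_sum_right matrix_vector_mul_assoc matrix_mul_assoc)
      also have "\<dots> = (\<Sum>A\<in>Ws. cinner (proj_onto A *v u) (Xm *v (proj_onto A *v v)))"
        by (intro sum.cong refl) (metis cinner_adj adj_proj sub onb_fin[OF W] finite_subset)
      also have "\<dots> = (\<Sum>A\<in>Ws. if A = A0 then (if v \<in> A0 then cinner u (Xm *v v) else 0) else 0)"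
        using A0 sub u v by (intro sum.cong refl) (auto simp: proj_mv[OF W] cinner_def)
      also have "\<dots> = (if v \<in> A0 then cinner u (Xm *v v) else 0)" using fWs A0 by (simp add: sum.delta')
      finally show ?thesis .
    qed
    have key: "I u v * cinner u (Y *v v) = (if u = v then cinner u (Xm *v u) else 0)"
      if u: "u \<in> W" and v: "v \<in> W" for u v
    proof -
      obtain A0 where A0: "A0 \<in> Ws" "u \<in> A0" "\<forall>A\<in>Ws. u \<in> A \<longleftrightarrow> A = A0" using blk[OF u] by blast
      show ?thesis
      proof (cases "u = v")
        case True thus ?thesis using Idiag[OF u] Ycoef[OF u v A0(1,3)] A0 by simp
      next
        case False
        show ?thesis
        proof (cases "v \<in> A0")
          case False thus ?thesis using Ycoef[OF u v A0(1,3)] \<open>u \<noteq> v\<close> by simp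
        next
          case vA: True
          have cu: "carries_char R H u (chi u)" unfolding carries_char_def using eig[OF u] by blast
          hence "\<not> carries_char R H v (chi u)" using nondeg A0 vA \<open>u \<noteq> v\<close> by blast
          then obtain h0 where h0: "h0 \<in> H" "R h0 *v v \<noteq> chi u h0 *s v" unfolding carries_char_def by blast
          hence neq: "chi v h0 \<noteq> chi u h0" using eig[OF v h0(1)] by auto
          have "psi u v h0 \<noteq> 1"
          proof
            assume "psi u v h0 = 1"
            hence "chi u h0 * (cnj (chi v h0) * chi v h0) = chi v h0" unfolding psi_def
              by (metis mult.assoc mult_1)
            thus False using norm1[OF v h0(1)] neq by simp
          qed
          thus ?thesis using Ioff[OF u v h0(1)] \<open>u \<noteq> v\<close> by simp
        qed
      qed
    qed
    show "A_W W Xm = T_H M R (hs_orth_proj (L_D Ws) Xm)"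
    proof (simp only: Yeq vec_eq_iff, intro allI)
      fix i j
      have "T_H M R Y $ i $ j = (\<Sum>u\<in>W. \<Sum>v\<in>W. (I u v * cinner u (Y *v v)) * outer u v $ i $ j)"
        by (simp add: TH mult.assoc)
      also have "\<dots> = (\<Sum>u\<in>W. \<Sum>v\<in>W. if v = u then cinner u (Xm *v u) * outer u u $ i $ j else 0)"
        by (intro sum.cong refl) (auto simp: key)
      also have "\<dots> = (\<Sum>u\<in>W. cinner u (Xm *v u) * outer u u $ i $ j)"
        using fW by (simp add: sum.delta')
      also have "\<dots> = A_W W Xm $ i $ j"
        unfolding A_W_def by (simp add: sum_component)
      finally show "A_W W Xm $ i $ j = T_H M R Y $ i $ j" by simp
    qed
  qed
qed

end
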